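(* Let $V$ be a real vector space of finite even dimension $n$ with nondegenerate quadratic form $Q$, and let $\sigma$ be a real structure on $\mathbb{C}l(V)$. Then the $\sigma$-product $(a,b)_\sigma:=\tau_n(\sigma(a^T)b)$ is a nondegenerate hermitian form on $\mathbb{C}l(V)$; its associated quadratic form restricts to $Q_\sigma$ on $V$ (i.e. $(v,v)_\sigma=Q_\sigma(v)$ for $v\in V$) and to $Q$ on $V_\sigma$; it satisfies $(w_1\cdots w_k,w_1\cdots w_k)_\sigma=Q(w_1)\cdots Q(w_k)$ for all $w_1,\dots,w_k\in V_\sigma$; and if $(e_i)_{1\le i\le n}$ is a pseudo-orthonormal basis of $V_\sigma$ for $Q$, then $(e_I)_{I\subset\{1,\dots,n\}}$ is a pseudo-orthonormal basis of $\mathbb{C}l(V)$ for the $\sigma$-product.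
   Context: $Cl(V,Q)$ is the real Clifford algebra with $v^2=+Q(v)$, $\mathbb{C}l(V)$ its complexification, $V^{\mathbb{C}}\subset\mathbb{C}l(V)$, $B$ the bilinear form of $Q$ extended complex-bilinearly. $T$ is the linear antiautomorphism of $\mathbb{C}l(V)$ restricting to the identity on $V$, $a^T=T(a)$. A real structure is an involutive antilinear algebra automorphism of $\mathbb{C}l(V)$ stabilizing $V^{\mathbb{C}}$. $V_\sigma=\{v\in V^{\mathbb{C}}:\sigma(v)=v\}$ (on which $Q$ is real and nondegenerate); $Q_\sigma(v)=B(\sigma(v),v)$ for $v\in V$. For a basis $(e_i)$ and $I=\{i_1<\dots<i_k\}$, $e_I=e_{i_1}\cdots e_{i_k}$, $e_\emptyset=1$. The normalized trace $\tau_n:\mathbb{C}l(V)\to\mathbb{C}$ is the coordinate on $1$ in the basis $(e_I)$ associated with any pseudo-orthonormal basis of $V^{\mathbb{C}}$ (it is the unique linear form with $\tau_n(ab)=\tau_n(ba)$ and $\tau_n(1)=1$). A pseudo-orthonormal basis for a form is an orthogonal basis whose vectors have square $\pm1$. *)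

theory Defs
  imports Complex_Main
begin

text \<open>By Sylvester's law of inertia we use a basis
e_0,...,e_(n-1) of V which is pseudo-orthonormal for Q, with Q(e_i) = eps i in {1,-1}.
An element of Cl(V) (complexified) is a coefficient function on subsets I of {..<n},
a I being the coordinate on the basis element e_I = e_(i_1)...e_(i_k) (i_1<...<i_k).\<close>

type_synonym cl = "nat set \<Rightarrow> complex"

definition CL :: "nat \<Rightarrow> cl set" where
  "CL n = {a. \<forall>I. a I \<noteq> 0 \<longrightarrow> I \<subseteq> {..<n}}"

definition cl_zero :: cl where "cl_zero = (\<lambda>I. 0)"
definition cl_one :: cl where "cl_one = (\<lambda>I. if I = {} then 1 else 0)"
definition cl_add :: "cl \<Rightarrow> cl \<Rightarrow> cl" where "cl_add a b = (\<lambda>I. a I + b I)"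
definition cl_scale :: "complex \<Rightarrow> cl \<Rightarrow> cl" where "cl_scale c a = (\<lambda>I. c * a I)"
definition cl_sum :: "('i \<Rightarrow> cl) \<Rightarrow> 'i set \<Rightarrow> cl" where
  "cl_sum f A = (\<lambda>K. \<Sum>i\<in>A. f i K)"

text \<open>Sign in e_I e_J = blade_sign eps I J * e_(I symdiff J), using v^2 = +Q(v).\<close>
definition blade_sign :: "(nat \<Rightarrow> real) \<Rightarrow> nat set \<Rightarrow> nat set \<Rightarrow> complex" where
  "blade_sign eps I J =
     (-1) ^ card {(i, j). i \<in> I \<and> j \<in> J \<and> j < i} * (\<Prod>k\<in>I \<inter> J. complex_of_real (eps k))"

definition cl_mul :: "nat \<Rightarrow> (nat \<Rightarrow> real) \<Rightarrow> cl \<Rightarrow> cl \<Rightarrow> cl" where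
  "cl_mul n eps a b = (\<lambda>K. \<Sum>I\<in>Pow {..<n}. \<Sum>J\<in>Pow {..<n}.
      if (I - J) \<union> (J - I) = K then blade_sign eps I J * a I * b J else 0)"

definition VC :: "nat \<Rightarrow> cl set" where
  "VC n = {a \<in> CL n. \<forall>I. a I \<noteq> 0 \<longrightarrow> card I = 1}"

definition VR :: "nat \<Rightarrow> cl set" where
  "VR n = {a \<in> VC n. \<forall>I. a I \<in> \<real>}"

definition clB :: "nat \<Rightarrow> (nat \<Rightarrow> real) \<Rightarrow> cl \<Rightarrow> cl \<Rightarrow> complex" where
  "clB n eps v w = (\<Sum>i<n. complex_of_real (eps i) * v {i} * w {i})"

definition clQ :: "nat \<Rightarrow> (nat \<Rightarrow> real) \<Rightarrow> cl \<Rightarrow> complex" where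
  "clQ n eps v = clB n eps v v"

text \<open>T: the linear antiautomorphism restricting to the identity on V (reversion).\<close>
definition cl_transpose :: "cl \<Rightarrow> cl" where
  "cl_transpose a = (\<lambda>I. (-1) ^ (card I * (card I - 1) div 2) * a I)"

definition tau :: "cl \<Rightarrow> complex" where "tau a = a {}"

definition real_structure :: "nat \<Rightarrow> (nat \<Rightarrow> real) \<Rightarrow> (cl \<Rightarrow> cl) \<Rightarrow> bool" where
  "real_structure n eps \<sigma> \<longleftrightarrow>
     (\<forall>a\<in>CL n. \<sigma> a \<in> CL n) \<and>
     (\<forall>a\<in>CL n. \<sigma> (\<sigma> a) = a) \<and>
     (\<forall>a\<in>CL n. \<forall>b\<in>CL n. \<sigma> (cl_add a b) = cl_add (\<sigma> a) (\<sigma> b)) \<and>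
     (\<forall>c. \<forall>a\<in>CL n. \<sigma> (cl_scale c a) = cl_scale (cnj c) (\<sigma> a)) \<and>
     (\<forall>a\<in>CL n. \<forall>b\<in>CL n. \<sigma> (cl_mul n eps a b) = cl_mul n eps (\<sigma> a) (\<sigma> b)) \<and>
     \<sigma> cl_one = cl_one \<and>
     (\<forall>v\<in>VC n. \<sigma> v \<in> VC n)"

definition V_sigma :: "nat \<Rightarrow> (cl \<Rightarrow> cl) \<Rightarrow> cl set" where
  "V_sigma n \<sigma> = {v \<in> VC n. \<sigma> v = v}"

definition Q_sigma :: "nat \<Rightarrow> (nat \<Rightarrow> real) \<Rightarrow> (cl \<Rightarrow> cl) \<Rightarrow> cl \<Rightarrow> complex" where
  "Q_sigma n eps \<sigma> v = clB n eps (\<sigma> v) v"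

definition sprod :: "nat \<Rightarrow> (nat \<Rightarrow> real) \<Rightarrow> (cl \<Rightarrow> cl) \<Rightarrow> cl \<Rightarrow> cl \<Rightarrow> complex" where
  "sprod n eps \<sigma> a b = tau (cl_mul n eps (\<sigma> (cl_transpose a)) b)"

definition hermitian_form :: "nat \<Rightarrow> (cl \<Rightarrow> cl \<Rightarrow> complex) \<Rightarrow> bool" where
  "hermitian_form n h \<longleftrightarrow>
     (\<forall>a\<in>CL n. \<forall>b\<in>CL n. \<forall>c\<in>CL n.
        h (cl_add a b) c = h a c + h b c \<and> h a (cl_add b c) = h a b + h a c) \<and>
     (\<forall>z. \<forall>a\<in>CL n. \<forall>b\<in>CL n.
        h (cl_scale z a) b = cnj z * h a b \<and> h a (cl_scale z b) = z * h a b) \<and>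
     (\<forall>a\<in>CL n. \<forall>b\<in>CL n. h b a = cnj (h a b))"

definition nondegenerate_form :: "nat \<Rightarrow> (cl \<Rightarrow> cl \<Rightarrow> complex) \<Rightarrow> bool" where
  "nondegenerate_form n h \<longleftrightarrow> (\<forall>a\<in>CL n. (\<forall>b\<in>CL n. h a b = 0) \<longrightarrow> a = cl_zero)"

definition cl_prod :: "nat \<Rightarrow> (nat \<Rightarrow> real) \<Rightarrow> cl list \<Rightarrow> cl" where
  "cl_prod n eps ws = foldr (cl_mul n eps) ws cl_one"

definition blade_of :: "nat \<Rightarrow> (nat \<Rightarrow> real) \<Rightarrow> (nat \<Rightarrow> cl) \<Rightarrow> nat set \<Rightarrow> cl" where
  "blade_of n eps e I = cl_prod n eps (map e (sorted_list_of_set I))"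

definition pon_basis_Vsigma :: "nat \<Rightarrow> (nat \<Rightarrow> real) \<Rightarrow> (cl \<Rightarrow> cl) \<Rightarrow> (nat \<Rightarrow> cl) \<Rightarrow> bool" where
  "pon_basis_Vsigma n eps \<sigma> e \<longleftrightarrow>
     (\<forall>i<n. e i \<in> V_sigma n \<sigma>) \<and>
     (\<forall>c :: nat \<Rightarrow> real. cl_sum (\<lambda>i. cl_scale (complex_of_real (c i)) (e i)) {..<n} = cl_zero
         \<longrightarrow> (\<forall>i<n. c i = 0)) \<and>
     (\<forall>v\<in>V_sigma n \<sigma>. \<exists>c :: nat \<Rightarrow> real.
         v = cl_sum (\<lambda>i. cl_scale (complex_of_real (c i)) (e i)) {..<n}) \<and>
     (\<forall>i<n. \<forall>j<n. i \<noteq> j \<longrightarrow> clB n eps (e i) (e j) = 0) \<and>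
     (\<forall>i<n. clQ n eps (e i) = 1 \<or> clQ n eps (e i) = -1)"

definition pon_basis_CL :: "nat \<Rightarrow> (cl \<Rightarrow> cl \<Rightarrow> complex) \<Rightarrow> (nat set \<Rightarrow> cl) \<Rightarrow> bool" where
  "pon_basis_CL n h f \<longleftrightarrow>
     (\<forall>I\<in>Pow {..<n}. f I \<in> CL n) \<and>
     (\<forall>c :: nat set \<Rightarrow> complex. cl_sum (\<lambda>I. cl_scale (c I) (f I)) (Pow {..<n}) = cl_zero
         \<longrightarrow> (\<forall>I\<in>Pow {..<n}. c I = 0)) \<and>
     (\<forall>a\<in>CL n. \<exists>c :: nat set \<Rightarrow> complex. a = cl_sum (\<lambda>I. cl_scale (c I) (f I)) (Pow {..<n})) \<and>
     (\<forall>I\<in>Pow {..<n}. \<forall>J\<in>Pow {..<n}. I \<noteq> J \<longrightarrow> h (f I) (f J) = 0) \<and>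
     (\<forall>I\<in>Pow {..<n}. h (f I) (f I) = 1 \<or> h (f I) (f I) = -1)"

end

theory Submission
  imports Defs "HOL-Library.Function_Algebras"
begin



definition sd :: "nat set \<Rightarrow> nat set \<Rightarrow> nat set" where "sd I J = (I - J) \<union> (J - I)"

lemma sd_eq_iff: "sd I J = K \<longleftrightarrow> J = sd I K"
  unfolding sd_def by blast
lemma sd_self[simp]: "sd I I = {}" unfolding sd_def by blast
lemma sd_empty[simp]: "sd I {} = I" "sd {} I = I" unfolding sd_def by auto
lemma sd_sd[simp]: "sd I (sd I K) = K" unfolding sd_def by blast
lemma sd_Pow: "I \<subseteq> {..<n} \<Longrightarrow> J \<subseteq> {..<n} \<Longrightarrow> sd I J \<subseteq> {..<n}" unfolding sd_def by blast
lemma sd_comm: "sd I J = sd J I" unfolding sd_def by blast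

lemma cl_mul_formula:
  "cl_mul n eps a b K = (if K \<subseteq> {..<n} then (\<Sum>I\<in>Pow {..<n}. blade_sign eps I (sd I K) * a I * b (sd I K)) else 0)"
proof (cases "K \<subseteq> {..<n}")
  case True
  have "cl_mul n eps a b K = (\<Sum>I\<in>Pow {..<n}. \<Sum>J\<in>Pow {..<n}. if J = sd I K then blade_sign eps I J * a I * b J else 0)"
    unfolding cl_mul_def by (intro sum.cong refl) (metis sd_def sd_eq_iff)
  also have "\<dots> = (\<Sum>I\<in>Pow {..<n}. blade_sign eps I (sd I K) * a I * b (sd I K))"
    using True by (intro sum.cong refl) (simp add: sd_Pow)
  finally show ?thesis using True by simp
next
  case False
  then show ?thesis unfolding cl_mul_def
    by (auto intro!: sum.neutral) 
qed

lemma cl_mul_CL: "cl_mul n eps a b \<in> CL n"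
  unfolding CL_def by (auto simp: cl_mul_formula split: if_splits)

lemma tau_mul: "tau (cl_mul n eps a b) = (\<Sum>I\<in>Pow {..<n}. blade_sign eps I I * a I * b I)"
  unfolding tau_def by (simp add: cl_mul_formula)

lemma tau_comm: "tau (cl_mul n eps a b) = tau (cl_mul n eps b a)"
  unfolding tau_mul by (intro sum.cong refl) simp




definition invc :: "nat set \<Rightarrow> nat set \<Rightarrow> nat" where
  "invc I J = card {(i, j). i \<in> I \<and> j \<in> J \<and> j < i}"

definition epsp :: "(nat \<Rightarrow> real) \<Rightarrow> nat set \<Rightarrow> complex" where
  "epsp eps S = (\<Prod>k\<in>S. complex_of_real (eps k))"

lemma bs_def2: "blade_sign eps I J = (-1) ^ invc I J * epsp eps (I \<inter> J)"
  unfolding blade_sign_def invc_def epsp_def by simp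

lemma inv_union1:
  assumes "finite X" "finite Y" "X \<inter> Y = {}" "finite C"
  shows "invc (X \<union> Y) C = invc X C + invc Y C"
proof -
  have "{(i, j). i \<in> X \<union> Y \<and> j \<in> C \<and> j < i} = {(i, j). i \<in> X \<and> j \<in> C \<and> j < i} \<union> {(i, j). i \<in> Y \<and> j \<in> C \<and> j < i}"
    by auto
  moreover have "finite {(i, j). i \<in> X \<and> j \<in> C \<and> j < i}"
    by (rule finite_subset[of _ "X \<times> C"]) (use assms in auto)
  moreover have "finite {(i, j). i \<in> Y \<and> j \<in> C \<and> j < i}"
    by (rule finite_subset[of _ "Y \<times> C"]) (use assms in auto)
  ultimately show ?thesis unfolding invc_def using assms(3)
    by (subst card_Un_disjoint[symmetric]) auto
qed

lemma inv_union2: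
  assumes "finite X" "finite Y" "X \<inter> Y = {}" "finite C"
  shows "invc C (X \<union> Y) = invc C X + invc C Y"
proof -
  have "{(i, j). i \<in> C \<and> j \<in> X \<union> Y \<and> j < i} = {(i, j). i \<in> C \<and> j \<in> X \<and> j < i} \<union> {(i, j). i \<in> C \<and> j \<in> Y \<and> j < i}"
    by auto
  moreover have "finite {(i, j). i \<in> C \<and> j \<in> X \<and> j < i}"
    by (rule finite_subset[of _ "C \<times> X"]) (use assms in auto)
  moreover have "finite {(i, j). i \<in> C \<and> j \<in> Y \<and> j < i}"
    by (rule finite_subset[of _ "C \<times> Y"]) (use assms in auto)
  ultimately show ?thesis unfolding invc_def using assms(3)
    by (subst card_Un_disjoint[symmetric]) auto
qed

lemma inv_sd1:
  assumes "finite A" "finite B" "finite C"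
  shows "invc (sd A B) C + 2 * invc (A \<inter> B) C = invc A C + invc B C"
proof -
  have A: "A = (A - B) \<union> (A \<inter> B)" and B: "B = (B - A) \<union> (A \<inter> B)" by auto
  have "invc A C = invc (A - B) C + invc (A \<inter> B) C"
    by (subst A, rule inv_union1) (use assms in auto)
  moreover have "invc B C = invc (B - A) C + invc (A \<inter> B) C"
    by (subst B, rule inv_union1) (use assms in auto)
  moreover have "invc (sd A B) C = invc (A - B) C + invc (B - A) C"
    unfolding sd_def by (rule inv_union1) (use assms in auto)
  ultimately show ?thesis by simp
qed

lemma inv_sd2:
  assumes "finite A" "finite B" "finite C"
  shows "invc C (sd A B) + 2 * invc C (A \<inter> B) = invc C A + invc C B"
proof -
  have A: "A = (A - B) \<union> (A \<inter> B)" and B: "B = (B - A) \<union> (A \<inter> B)" by auto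
  have "invc C A = invc C (A - B) + invc C (A \<inter> B)"
    by (subst A, rule inv_union2) (use assms in auto)
  moreover have "invc C B = invc C (B - A) + invc C (A \<inter> B)"
    by (subst B, rule inv_union2) (use assms in auto)
  moreover have "invc C (sd A B) = invc C (A - B) + invc C (B - A)"
    unfolding sd_def by (rule inv_union2) (use assms in auto)
  ultimately show ?thesis by simp
qed

lemma neg1_pow_cong: "even (x + y) \<Longrightarrow> ((-1::complex) ^ x) = (-1) ^ y"
  by (metis even_add neg_one_even_power neg_one_odd_power)

lemma epsp_union: "finite X \<Longrightarrow> finite Y \<Longrightarrow> X \<inter> Y = {} \<Longrightarrow> epsp eps (X \<union> Y) = epsp eps X * epsp eps Y"
  unfolding epsp_def by (rule prod.union_disjoint)

lemma par: "(p::nat) + 2*x = q + r \<Longrightarrow> s + 2*y = t + q \<Longrightarrow> even (t + p + (s + r))"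
proof -
  assume a: "(p::nat) + 2*x = q + r" "s + 2*y = t + q"
  have h: "t + p + (s + r) + 2*(x+y) = 2 * (t + q + r)" using a by (simp add: algebra_simps)
  have "even (t + p + (s + r) + 2*(x+y))" by (simp only: h) simp
  then show ?thesis by simp
qed

lemma cocycle:
  assumes "finite I" "finite J" "finite L"
  shows "blade_sign eps I J * blade_sign eps (sd I J) L = blade_sign eps I (sd J L) * blade_sign eps J L"
proof -
  have s: "((-1::complex) ^ (invc I J + invc (sd I J) L)) = (-1) ^ (invc I (sd J L) + invc J L)"
    apply (rule neg1_pow_cong)
    using par[OF inv_sd1[of I J L, OF assms] inv_sd2[of J L I, OF assms(2,3,1)]] .
  define M where "M = (I \<inter> J) \<union> (I \<inter> L) \<union> (J \<inter> L)"
  have e1: "epsp eps (I \<inter> J) * epsp eps (sd I J \<inter> L) = epsp eps M"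
  proof -
    have "M = (I \<inter> J) \<union> (sd I J \<inter> L)" unfolding M_def sd_def by blast
    then show ?thesis using assms by (simp only:, subst epsp_union) (auto simp: sd_def)
  qed
  have e2: "epsp eps (I \<inter> sd J L) * epsp eps (J \<inter> L) = epsp eps M"
  proof -
    have "M = (I \<inter> sd J L) \<union> (J \<inter> L)" unfolding M_def sd_def by blast
    then show ?thesis using assms by (simp only:, subst epsp_union) (auto simp: sd_def)
  qed
  have "blade_sign eps I J * blade_sign eps (sd I J) L = (-1) ^ (invc I J + invc (sd I J) L) * (epsp eps (I \<inter> J) * epsp eps (sd I J \<inter> L))"
    unfolding bs_def2 power_add by (simp only: mult_ac)
  also have "\<dots> = (-1) ^ (invc I (sd J L) + invc J L) * (epsp eps (I \<inter> sd J L) * epsp eps (J \<inter> L))"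
    by (simp only: s e1 e2)
  also have "\<dots> = blade_sign eps I (sd J L) * blade_sign eps J L"
    unfolding bs_def2 power_add by (simp only: mult_ac)
  finally show ?thesis .
qed




lemma sd_assoc: "sd (sd I J) K = sd I (sd J K)" unfolding sd_def by blast

lemma sd_left_comm: "sd J (sd I K) = sd I (sd J K)" unfolding sd_def by blast

lemma sum_sd_reindex:
  assumes "I \<subseteq> {..<n}"
  shows "(\<Sum>M\<in>Pow {..<n}. f M) = (\<Sum>J\<in>Pow {..<n}. f (sd I J))"
  by (rule sum.reindex_bij_witness[of _ "sd I" "sd I"]) (use assms in \<open>auto simp: sd_Pow\<close>)

lemma finite_sub: "I \<subseteq> {..<(n::nat)} \<Longrightarrow> finite I" using finite_subset[of I "{..<n}"] by simp

lemma cl_mul_in: "K \<subseteq> {..<n} \<Longrightarrow> cl_mul n eps a b K = (\<Sum>I\<in>Pow {..<n}. blade_sign eps I (sd I K) * a I * b (sd I K))"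
  by (simp add: cl_mul_formula)

lemma cl_mul_assoc:
  "cl_mul n eps (cl_mul n eps a b) c = cl_mul n eps a (cl_mul n eps b c)"
proof (rule ext)
  fix K
  show "cl_mul n eps (cl_mul n eps a b) c K = cl_mul n eps a (cl_mul n eps b c) K"
  proof (cases "K \<subseteq> {..<n}")
    case False then show ?thesis by (simp add: cl_mul_formula)
  next
    case K: True
    let ?P = "Pow {..<n}"
    have "cl_mul n eps (cl_mul n eps a b) c K =
      (\<Sum>M\<in>?P. blade_sign eps M (sd M K) * cl_mul n eps a b M * c (sd M K))"
      using K by (rule cl_mul_in)
    also have "\<dots> = (\<Sum>M\<in>?P. \<Sum>I\<in>?P. blade_sign eps M (sd M K) * (blade_sign eps I (sd I M) * a I * b (sd I M)) * c (sd M K))"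
    proof (intro sum.cong refl)
      fix M assume "M \<in> ?P"
      then show "blade_sign eps M (sd M K) * cl_mul n eps a b M * c (sd M K) = (\<Sum>I\<in>?P. blade_sign eps M (sd M K) * (blade_sign eps I (sd I M) * a I * b (sd I M)) * c (sd M K))"
        by (simp only: cl_mul_in[of M n] PowD sum_distrib_left sum_distrib_right)
    qed
    also have "\<dots> = (\<Sum>I\<in>?P. \<Sum>M\<in>?P. blade_sign eps M (sd M K) * (blade_sign eps I (sd I M) * a I * b (sd I M)) * c (sd M K))"
      by (rule sum.swap)
    also have "\<dots> = (\<Sum>I\<in>?P. \<Sum>J\<in>?P. blade_sign eps (sd I J) (sd (sd I J) K) * (blade_sign eps I J * a I * b J) * c (sd (sd I J) K))"
    proof (rule sum.cong[OF refl])
      fix I assume I: "I \<in> ?P"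
      then show "(\<Sum>M\<in>?P. blade_sign eps M (sd M K) * (blade_sign eps I (sd I M) * a I * b (sd I M)) * c (sd M K)) =
        (\<Sum>J\<in>?P. blade_sign eps (sd I J) (sd (sd I J) K) * (blade_sign eps I J * a I * b J) * c (sd (sd I J) K))"
        using sum_sd_reindex[of I n "\<lambda>M. blade_sign eps M (sd M K) * (blade_sign eps I (sd I M) * a I * b (sd I M)) * c (sd M K)"]
        by (simp only: PowD sd_sd)
    qed
    also have "\<dots> = (\<Sum>I\<in>?P. \<Sum>J\<in>?P. blade_sign eps I (sd I K) * a I * (blade_sign eps J (sd J (sd I K)) * b J * c (sd J (sd I K))))"
    proof (intro sum.cong refl)
      fix I J assume I: "I \<in> ?P" and J: "J \<in> ?P"
      define L where "L = sd (sd I J) K"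
      have e1: "sd (sd I J) K = L" by (simp only: L_def)
      have e2: "sd J (sd I K) = L" by (simp only: L_def sd_assoc sd_left_comm[of J I])
      have e3: "sd I K = sd J L" by (simp only: L_def sd_assoc sd_left_comm[of J I] sd_sd)
      have "L \<subseteq> {..<n}" using I J K unfolding L_def by (simp add: sd_Pow)
      then have fin: "finite I" "finite J" "finite L" using I J by (auto intro: finite_sub)
      have cc: "blade_sign eps I J * blade_sign eps (sd I J) L = blade_sign eps I (sd J L) * blade_sign eps J L"
        by (rule cocycle[OF fin])
      show "blade_sign eps (sd I J) (sd (sd I J) K) * (blade_sign eps I J * a I * b J) * c (sd (sd I J) K) =
        blade_sign eps I (sd I K) * a I * (blade_sign eps J (sd J (sd I K)) * b J * c (sd J (sd I K)))"
        unfolding e1 e2 unfolding e3 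
      proof -
        have "blade_sign eps (sd I J) L * (blade_sign eps I J * a I * b J) * c L = (blade_sign eps I J * blade_sign eps (sd I J) L) * (a I * b J * c L)"
          by (simp only: mult_ac)
        also have "\<dots> = (blade_sign eps I (sd J L) * blade_sign eps J L) * (a I * b J * c L)" by (simp only: cc)
        also have "\<dots> = blade_sign eps I (sd J L) * a I * (blade_sign eps J L * b J * c L)" by (simp only: mult_ac)
        finally show "blade_sign eps (sd I J) L * (blade_sign eps I J * a I * b J) * c L = blade_sign eps I (sd J L) * a I * (blade_sign eps J L * b J * c L)" .
      qed
    qed
    also have "\<dots> = (\<Sum>I\<in>?P. blade_sign eps I (sd I K) * a I * cl_mul n eps b c (sd I K))"
    proof (intro sum.cong refl)
      fix I assume "I \<in> ?P"
      then have "sd I K \<subseteq> {..<n}" using K sd_Pow by blast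
      from cl_mul_in[OF this, of eps b c] show "(\<Sum>J\<in>?P. blade_sign eps I (sd I K) * a I * (blade_sign eps J (sd J (sd I K)) * b J * c (sd J (sd I K)))) = blade_sign eps I (sd I K) * a I * cl_mul n eps b c (sd I K)"
        by (simp only: sum_distrib_left)
    qed
    also have "\<dots> = cl_mul n eps a (cl_mul n eps b c) K"
      using K by (rule cl_mul_in[symmetric])
    finally show ?thesis .
  qed
qed




lemma bs_empty[simp]: "blade_sign eps {} J = 1" "blade_sign eps I {} = 1"
  unfolding blade_sign_def by simp_all

lemma CL_D: "a \<in> CL n \<Longrightarrow> \<not> K \<subseteq> {..<n} \<Longrightarrow> a K = 0"
  unfolding CL_def by blast

lemma cl_mul_one_left: "b \<in> CL n \<Longrightarrow> cl_mul n eps cl_one b = b"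
proof (rule ext)
  fix K assume b: "b \<in> CL n"
  show "cl_mul n eps cl_one b K = b K"
  proof (cases "K \<subseteq> {..<n}")
    case True
    have "cl_mul n eps cl_one b K = (\<Sum>I\<in>Pow {..<n}. blade_sign eps I (sd I K) * cl_one I * b (sd I K))"
      by (rule cl_mul_in[OF True])
    also have "\<dots> = (\<Sum>I\<in>Pow {..<n}. if I = {} then b K else 0)"
      by (rule sum.cong) (auto simp: cl_one_def)
    also have "\<dots> = b K" by (simp add: sum.delta')
    finally show ?thesis .
  qed (simp add: cl_mul_formula CL_D[OF b])
qed

lemma cl_mul_one_right: "b \<in> CL n \<Longrightarrow> cl_mul n eps b cl_one = b"
proof (rule ext)
  fix K assume b: "b \<in> CL n"
  show "cl_mul n eps b cl_one K = b K"
  proof (cases "K \<subseteq> {..<n}")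
    case True
    have e: "sd I K = {} \<longleftrightarrow> I = K" for I unfolding sd_def by blast
    have "cl_mul n eps b cl_one K = (\<Sum>I\<in>Pow {..<n}. blade_sign eps I (sd I K) * b I * cl_one (sd I K))"
      by (rule cl_mul_in[OF True])
    also have "\<dots> = (\<Sum>I\<in>Pow {..<n}. if I = K then b K else 0)"
      by (rule sum.cong) (auto simp: cl_one_def e)
    also have "\<dots> = b K" using True by (simp add: sum.delta')
    finally show ?thesis .
  qed (simp add: cl_mul_formula CL_D[OF b])
qed

lemma cl_mul_add_left: "cl_mul n eps (cl_add a b) c = cl_add (cl_mul n eps a c) (cl_mul n eps b c)"
  by (rule ext) (simp add: cl_mul_formula cl_add_def sum.distrib algebra_simps)

lemma cl_mul_add_right: "cl_mul n eps c (cl_add a b) = cl_add (cl_mul n eps c a) (cl_mul n eps c b)"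
  by (rule ext) (simp add: cl_mul_formula cl_add_def sum.distrib algebra_simps)

lemma cl_mul_scale_left: "cl_mul n eps (cl_scale z a) c = cl_scale z (cl_mul n eps a c)"
  by (rule ext) (simp add: cl_mul_formula cl_scale_def sum_distrib_left algebra_simps)

lemma cl_mul_scale_right: "cl_mul n eps c (cl_scale z a) = cl_scale z (cl_mul n eps c a)"
  by (rule ext) (simp add: cl_mul_formula cl_scale_def sum_distrib_left algebra_simps)

lemma cl_mul_zero_left[simp]: "cl_mul n eps cl_zero c = cl_zero"
  by (rule ext) (simp add: cl_mul_formula cl_zero_def)

lemma cl_mul_zero_right[simp]: "cl_mul n eps c cl_zero = cl_zero"
  by (rule ext) (simp add: cl_mul_formula cl_zero_def)

lemma CL_I: "(\<And>K. \<not> K \<subseteq> {..<n} \<Longrightarrow> a K = 0) \<Longrightarrow> a \<in> CL n"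
  unfolding CL_def by blast
lemma CL_add: "a \<in> CL n \<Longrightarrow> b \<in> CL n \<Longrightarrow> cl_add a b \<in> CL n"
  by (rule CL_I) (simp add: cl_add_def CL_D)
lemma CL_scale: "a \<in> CL n \<Longrightarrow> cl_scale z a \<in> CL n"
  unfolding CL_def cl_scale_def by auto
lemma CL_zero: "cl_zero \<in> CL n" unfolding CL_def cl_zero_def by auto
lemma CL_one: "cl_one \<in> CL n" unfolding CL_def cl_one_def by auto
lemma CL_sum: "(\<And>i. i \<in> A \<Longrightarrow> f i \<in> CL n) \<Longrightarrow> cl_sum f A \<in> CL n"
  by (rule CL_I) (auto simp: cl_sum_def intro!: sum.neutral CL_D)




definition tt :: "nat \<Rightarrow> nat" where "tt m = m * (m - 1) div 2"

lemma tt2: "2 * int (tt m) = int m * (int m - 1)"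
proof -
  have "even (m * (m - 1))" by (cases "even m") auto
  then have "2 * tt m = m * (m - 1)" unfolding tt_def by simp
  then have "int (2 * tt m) = int (m * (m - 1))" by simp
  then show ?thesis by (cases m) (auto simp: algebra_simps)
qed

lemma even_int_mm: "even ((x::int) * (x - 1))" by (cases "even x") auto

lemma parity_T:
  assumes "x + y + c = (c + p) * (c + q)"
  shows "even (tt (p + q) + x + tt (c + p) + tt (c + q) + y)"
proof -
  define N where "N = tt (p + q) + x + tt (c + p) + tt (c + q) + y"
  have h: "int x + int y = (int c + int p) * (int c + int q) - int c"
    using arg_cong[OF assms, of int] by simp
  have "2 * int N = 2 * int (tt (p + q)) + 2 * int (tt (c + p)) + 2 * int (tt (c + q)) + 2 * (int x + int y)"
    unfolding N_def by simp
  also have "\<dots> = 4 * (int c * int c + int p * int q + int c * int p + int c * int q - int c) + 2 * (int p * (int p - 1)) + 2 * (int q * (int q - 1))"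
    unfolding tt2 h by (simp add: algebra_simps)
  finally have "int N = 2 * (int c * int c + int p * int q + int c * int p + int c * int q - int c) + int p * (int p - 1) + int q * (int q - 1)"
    by simp
  then have "even (int N)" using even_int_mm[of "int p"] even_int_mm[of "int q"] by simp
  then show ?thesis unfolding N_def by simp
qed

lemma card_sd:
  assumes "finite I" "finite J"
  shows "card (sd I J) + 2 * card (I \<inter> J) = card I + card J"
proof -
  have "card (sd I J) = card (I - J) + card (J - I)"
    unfolding sd_def using assms by (intro card_Un_disjoint) auto
  moreover have "card I = card (I - J) + card (I \<inter> J)"
    using assms card_Un_disjoint[of "I - J" "I \<inter> J"] by (metis Diff_partition Int_lower1 inf_commute card_Diff_subset_Int Int_Diff_disjoint add.commute card_Int_Diff[of I J])
  moreover have "card J = card (J - I) + card (I \<inter> J)"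
    using assms by (metis Int_commute add.commute card_Int_Diff[of J I])
  ultimately show ?thesis by simp
qed

lemma inv_swap:
  assumes "finite I" "finite J"
  shows "invc I J + invc J I + card (I \<inter> J) = card I * card J"
proof -
  let ?A = "{(i, j). i \<in> I \<and> j \<in> J \<and> j < i}"
  let ?B = "{(i, j). i \<in> I \<and> j \<in> J \<and> i < j}"
  let ?D = "{(i, j). i \<in> I \<and> j \<in> J \<and> i = j}"
  have fin: "finite ?A" "finite ?B" "finite ?D"
    by (rule finite_subset[of _ "I \<times> J"], use assms in auto)+
  have "I \<times> J = ?A \<union> ?B \<union> ?D" by auto
  then have "card I * card J = card (?A \<union> ?B \<union> ?D)" by (metis card_cartesian_product)
  also have "\<dots> = card ?A + card ?B + card ?D"
  proof -
    have "card (?A \<union> ?B \<union> ?D) = card (?A \<union> ?B) + card ?D"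
      by (rule card_Un_disjoint) (use fin in auto)
    moreover have "card (?A \<union> ?B) = card ?A + card ?B"
      by (rule card_Un_disjoint) (use fin in auto)
    ultimately show ?thesis by simp
  qed
  also have "card ?B = invc J I"
    unfolding invc_def by (rule bij_betw_same_card[of "\<lambda>(i, j). (j, i)"]) (auto simp: bij_betw_def inj_on_def)
  also have "card ?D = card (I \<inter> J)"
    by (rule bij_betw_same_card[of "\<lambda>(i, j). i"]) (auto simp: bij_betw_def inj_on_def image_def)
  finally show ?thesis unfolding invc_def by simp
qed

definition sT :: "nat set \<Rightarrow> complex" where "sT K = (-1) ^ tt (card K)"

lemma sign_T:
  assumes "finite I" "finite J"
  shows "sT (sd I J) * blade_sign eps I J = sT I * sT J * blade_sign eps J I"
proof -
  define c where "c = card (I \<inter> J)"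
  define p where "p = card I - c"
  define q where "q = card J - c"
  have cI: "card I = c + p" unfolding p_def c_def using assms by (simp add: card_mono)
  have cJ: "card J = c + q" unfolding q_def c_def using assms by (simp add: card_mono)
  have ck: "card (sd I J) = p + q" using card_sd[OF assms] cI cJ c_def by simp
  have "invc I J + invc J I + c = (c + p) * (c + q)" using inv_swap[OF assms] cI cJ c_def by simp
  from parity_T[OF this] have "even (tt (p + q) + invc I J + (tt (c + p) + tt (c + q) + invc J I))"
    by (simp add: algebra_simps)
  then have "(-1::complex) ^ (tt (p + q) + invc I J) = (-1) ^ (tt (c + p) + tt (c + q) + invc J I)"
    by (intro neg1_pow_cong) (simp add: algebra_simps)
  then show ?thesis unfolding sT_def bs_def2 ck cI cJ power_add
    by (simp add: Int_commute mult_ac)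
qed

lemma transpose_mul:
  "cl_transpose (cl_mul n eps a b) = cl_mul n eps (cl_transpose b) (cl_transpose a)"
proof (rule ext)
  fix K
  show "cl_transpose (cl_mul n eps a b) K = cl_mul n eps (cl_transpose b) (cl_transpose a) K"
  proof (cases "K \<subseteq> {..<n}")
    case False then show ?thesis by (simp add: cl_mul_formula cl_transpose_def)
  next
    case True
    have ct: "cl_transpose a I = sT I * a I" for a I unfolding cl_transpose_def sT_def tt_def by simp
    have "cl_transpose (cl_mul n eps a b) K = sT K * (\<Sum>I\<in>Pow {..<n}. blade_sign eps I (sd I K) * a I * b (sd I K))"
      unfolding ct cl_mul_in[OF True] ..
    also have "\<dots> = (\<Sum>I\<in>Pow {..<n}. sT (sd I (sd I K)) * blade_sign eps I (sd I K) * a I * b (sd I K))"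
      by (simp add: sum_distrib_left mult_ac)
    also have "\<dots> = (\<Sum>I\<in>Pow {..<n}. sT I * sT (sd I K) * blade_sign eps (sd I K) I * a I * b (sd I K))"
    proof (rule sum.cong[OF refl])
      fix I assume "I \<in> Pow {..<n}"
      then have "finite I" "finite (sd I K)" using True sd_Pow[of I n K] by (auto intro: finite_sub)
      from sign_T[OF this, of eps] show "sT (sd I (sd I K)) * blade_sign eps I (sd I K) * a I * b (sd I K) = sT I * sT (sd I K) * blade_sign eps (sd I K) I * a I * b (sd I K)"
        by simp
    qed
    also have "\<dots> = (\<Sum>J\<in>Pow {..<n}. sT (sd J K) * sT J * blade_sign eps J (sd J K) * a (sd J K) * b J)"
      using sum_sd_reindex[OF True, of "\<lambda>I. sT I * sT (sd I K) * blade_sign eps (sd I K) I * a I * b (sd I K)"]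
      by (simp add: sd_comm[of K] sd_assoc)
    also have "\<dots> = cl_mul n eps (cl_transpose b) (cl_transpose a) K"
      unfolding cl_mul_in[OF True] ct by (intro sum.cong refl) (simp add: sd_assoc mult_ac)
    finally show ?thesis .
  qed
qed

lemma transpose_add: "cl_transpose (cl_add a b) = cl_add (cl_transpose a) (cl_transpose b)"
  unfolding cl_transpose_def cl_add_def by (simp add: algebra_simps)
lemma transpose_scale: "cl_transpose (cl_scale z a) = cl_scale z (cl_transpose a)"
  unfolding cl_transpose_def cl_scale_def by (simp add: algebra_simps)
lemma transpose_CL: "a \<in> CL n \<Longrightarrow> cl_transpose a \<in> CL n"
  by (rule CL_I) (simp add: cl_transpose_def CL_D)
lemma tau_transpose: "tau (cl_transpose a) = tau a"
  unfolding tau_def cl_transpose_def by simp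
lemma transpose_one: "cl_transpose cl_one = cl_one"
  unfolding cl_transpose_def cl_one_def by auto
lemma transpose_VC: "v \<in> VC n \<Longrightarrow> cl_transpose v = v"
  unfolding cl_transpose_def VC_def by (rule ext) (case_tac "v x = 0", auto)
lemma transpose_transpose: "cl_transpose (cl_transpose a) = a"
  unfolding cl_transpose_def by (rule ext) (simp flip: power_mult_distrib power_add add: mult_2[symmetric] power_mult)




lemma cl_prod_Nil[simp]: "cl_prod n eps [] = cl_one" unfolding cl_prod_def by simp
lemma cl_prod_Cons[simp]: "cl_prod n eps (w # ws) = cl_mul n eps w (cl_prod n eps ws)" unfolding cl_prod_def by simp

lemma cl_prod_CL: "cl_prod n eps ws \<in> CL n"
  by (cases ws) (auto simp: CL_one cl_mul_CL)

lemma cl_prod_append: "cl_prod n eps (xs @ ys) = cl_mul n eps (cl_prod n eps xs) (cl_prod n eps ys)"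
  by (induction xs) (auto simp: cl_mul_one_left cl_prod_CL cl_mul_assoc)

lemma cl_prod_single: "w \<in> CL n \<Longrightarrow> cl_prod n eps [w] = w"
  by (simp add: cl_mul_one_right)

definition dl :: "nat set \<Rightarrow> cl" where "dl K = (\<lambda>I. if I = K then 1 else 0)"

lemma dl_CL: "K \<subseteq> {..<n} \<Longrightarrow> dl K \<in> CL n" unfolding CL_def dl_def by auto

lemma dl_empty: "dl {} = cl_one" unfolding dl_def cl_one_def ..

lemma cl_mul_dl:
  assumes "I \<subseteq> {..<n}" "J \<subseteq> {..<n}"
  shows "cl_mul n eps (dl I) (dl J) = cl_scale (blade_sign eps I J) (dl (sd I J))"
proof (rule ext)
  fix K
  show "cl_mul n eps (dl I) (dl J) K = cl_scale (blade_sign eps I J) (dl (sd I J)) K"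
  proof (cases "K \<subseteq> {..<n}")
    case True
    have "cl_mul n eps (dl I) (dl J) K = (\<Sum>I'\<in>Pow {..<n}. if I' = I then blade_sign eps I (sd I K) * dl J (sd I K) else 0)"
      unfolding cl_mul_in[OF True] by (rule sum.cong) (auto simp: dl_def)
    also have "\<dots> = blade_sign eps I (sd I K) * dl J (sd I K)" using assms by (simp add: sum.delta')
    also have "\<dots> = cl_scale (blade_sign eps I J) (dl (sd I J)) K"
      unfolding cl_scale_def dl_def using sd_eq_iff[of I J K] by (auto simp: sd_eq_iff)
    finally show ?thesis .
  next
    case False
    then have "sd I J \<noteq> K" using sd_Pow[OF assms] by blast
    then show ?thesis using False by (simp add: cl_mul_formula cl_scale_def dl_def)
  qed
qed

definition ds :: "nat \<Rightarrow> cl" where "ds i = dl {i}"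

lemma dl_sorted:
  assumes "sorted_wrt (<) L" "set L \<subseteq> {..<n}"
  shows "cl_prod n eps (map ds L) = dl (set L)"
  using assms
proof (induction L)
  case Nil then show ?case by (simp add: dl_empty)
next
  case (Cons i L)
  then have IH: "cl_prod n eps (map ds L) = dl (set L)" by auto
  have lt: "\<forall>j\<in>set L. i < j" using Cons.prems by simp
  have "cl_mul n eps (ds i) (dl (set L)) = cl_scale (blade_sign eps {i} (set L)) (dl (sd {i} (set L)))"
    unfolding ds_def by (rule cl_mul_dl) (use Cons.prems in auto)
  moreover have "blade_sign eps {i} (set L) = 1"
  proof -
    have "{(a, j). a \<in> {i} \<and> j \<in> set L \<and> j < a} = {}" using lt by auto
    moreover have "{i} \<inter> set L = {}" using lt by auto
    ultimately show ?thesis unfolding blade_sign_def by (simp only:) simp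
  qed
  moreover have "sd {i} (set L) = insert i (set L)" using lt unfolding sd_def by auto
  ultimately have "cl_mul n eps (ds i) (dl (set L)) = dl (insert i (set L))"
    unfolding cl_scale_def by simp
  then show ?case using IH by simp
qed

lemma dl_prod:
  assumes "K \<subseteq> {..<n}"
  shows "dl K = cl_prod n eps (map ds (sorted_list_of_set K))"
proof -
  have fK: "finite K" using assms by (rule finite_sub)
  show ?thesis using dl_sorted[of "sorted_list_of_set K" n eps] fK assms
    by simp
qed

lemma CL_decomp:
  assumes "a \<in> CL n"
  shows "a = cl_sum (\<lambda>K. cl_scale (a K) (dl K)) (Pow {..<n})"
proof (rule ext)
  fix I
  show "a I = cl_sum (\<lambda>K. cl_scale (a K) (dl K)) (Pow {..<n}) I"
  proof (cases "I \<subseteq> {..<n}")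
    case True
    then show ?thesis unfolding cl_sum_def cl_scale_def dl_def
      by (simp add: sum.delta' if_distrib[of "\<lambda>x. _ * x"] cong: if_cong)
  next
    case False
    then show ?thesis unfolding cl_sum_def cl_scale_def dl_def using CL_D[OF assms False]
      by (auto intro!: sum.neutral)
  qed
qed




lemma VC_D: "v \<in> VC n \<Longrightarrow> v I \<noteq> 0 \<Longrightarrow> card I = 1 \<and> I \<subseteq> {..<n}"
  unfolding VC_def CL_def by blast

lemma VC_D0: "v \<in> VC n \<Longrightarrow> card I \<noteq> 1 \<Longrightarrow> v I = 0"
  using VC_D by blast

lemma VC_CL: "v \<in> VC n \<Longrightarrow> v \<in> CL n" unfolding VC_def by blast

lemma sum_singletons:
  assumes "\<forall>I\<in>Pow {..<(n::nat)}. f I \<noteq> 0 \<longrightarrow> card I = 1"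
  shows "(\<Sum>I\<in>Pow {..<n}. f I) = (\<Sum>i<n. f {i})"
proof -
  have "(\<Sum>i<n. f {i}) = sum f ((\<lambda>i. {i}) ` {..<n})"
    by (subst sum.reindex) (auto simp: inj_on_def)
  also have "\<dots> = (\<Sum>I\<in>Pow {..<n}. f I)"
  proof (rule sum.mono_neutral_left)
    show "\<forall>I\<in>Pow {..<n} - (\<lambda>i. {i}) ` {..<n}. f I = 0"
    proof
      fix I assume I: "I \<in> Pow {..<n} - (\<lambda>i. {i}) ` {..<n}"
      show "f I = 0"
      proof (rule ccontr)
        assume "f I \<noteq> 0"
        then have "card I = 1" using assms I by blast
        then obtain x where "I = {x}" by (auto simp: card_Suc_eq)
        then show False using I by auto
      qed
    qed
  qed auto
  finally show ?thesis ..
qed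

lemma pairs_single: "{(a, b). a \<in> {i} \<and> b \<in> {j} \<and> b < a} = (if j < i then {(i, j)} else {})"
  by auto

lemma bs_single: "blade_sign eps {i} {i} = complex_of_real (eps i)"
  unfolding blade_sign_def pairs_single by simp

lemma bs_pair: "blade_sign eps {i} {j} + blade_sign eps {j} {i} = (if i = j then 2 * complex_of_real (eps i) else 0)"
  unfolding blade_sign_def pairs_single by (cases i j rule: linorder_cases) auto

lemma cl_mul_VC:
  assumes "v \<in> VC n" "w \<in> VC n"
  shows "cl_mul n eps v w K = (\<Sum>i<n. \<Sum>j<n. if sd {i} {j} = K then blade_sign eps {i} {j} * v {i} * w {j} else 0)"
proof -
  have "cl_mul n eps v w K = (\<Sum>I\<in>Pow {..<n}. \<Sum>J\<in>Pow {..<n}. if sd I J = K then blade_sign eps I J * v I * w J else 0)"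
    unfolding cl_mul_def sd_def ..
  also have "\<dots> = (\<Sum>I\<in>Pow {..<n}. \<Sum>j<n. if sd I {j} = K then blade_sign eps I {j} * v I * w {j} else 0)"
    by (intro sum.cong refl sum_singletons) (auto dest: VC_D[OF assms(2)])
  also have "\<dots> = (\<Sum>i<n. \<Sum>j<n. if sd {i} {j} = K then blade_sign eps {i} {j} * v {i} * w {j} else 0)"
    by (intro sum_singletons) (auto simp: VC_D0[OF assms(1)] intro!: sum.neutral)
  finally show ?thesis .
qed

lemma VC_anticomm:
  assumes "v \<in> VC n" "w \<in> VC n"
  shows "cl_add (cl_mul n eps v w) (cl_mul n eps w v) = cl_scale (2 * clB n eps v w) cl_one"
proof (rule ext)
  fix K
  have "cl_add (cl_mul n eps v w) (cl_mul n eps w v) K =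
    (\<Sum>i<n. \<Sum>j<n. if sd {i} {j} = K then blade_sign eps {i} {j} * v {i} * w {j} else 0) +
    (\<Sum>i<n. \<Sum>j<n. if sd {i} {j} = K then blade_sign eps {i} {j} * w {i} * v {j} else 0)"
    unfolding cl_add_def cl_mul_VC[OF assms] cl_mul_VC[OF assms(2,1)] ..
  also have "(\<Sum>i<n. \<Sum>j<n. if sd {i} {j} = K then blade_sign eps {i} {j} * w {i} * v {j} else 0) =
     (\<Sum>i<n. \<Sum>j<n. if sd {i} {j} = K then blade_sign eps {j} {i} * v {i} * w {j} else 0)"
    by (subst sum.swap) (intro sum.cong refl, subst sd_comm, simp add: mult_ac)
  also have "(\<Sum>i<n. \<Sum>j<n. if sd {i} {j} = K then blade_sign eps {i} {j} * v {i} * w {j} else 0) + \<dots> =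
     (\<Sum>i<n. \<Sum>j<n. if sd {i} {j} = K then (blade_sign eps {i} {j} + blade_sign eps {j} {i}) * v {i} * w {j} else 0)"
    by (simp add: sum.distrib[symmetric] algebra_simps if_distrib cong: if_cong)
  also have "\<dots> = (\<Sum>i<n. \<Sum>j<n. if j = i then (if K = {} then 2 * complex_of_real (eps i) * v {i} * w {i} else 0) else 0)"
    unfolding bs_pair by (intro sum.cong refl) auto
  also have "\<dots> = (if K = {} then 2 * clB n eps v w else 0)"
    unfolding clB_def by (simp add: sum_distrib_left mult_ac)
  also have "\<dots> = cl_scale (2 * clB n eps v w) cl_one K"
    unfolding cl_scale_def cl_one_def by simp
  finally show "cl_add (cl_mul n eps v w) (cl_mul n eps w v) K = cl_scale (2 * clB n eps v w) cl_one K" .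
qed

lemma tau_VC:
  assumes "v \<in> VC n" "w \<in> VC n"
  shows "tau (cl_mul n eps v w) = clB n eps v w"
proof -
  have "tau (cl_mul n eps v w) = (\<Sum>I\<in>Pow {..<n}. blade_sign eps I I * v I * w I)" by (rule tau_mul)
  also have "\<dots> = (\<Sum>i<n. blade_sign eps {i} {i} * v {i} * w {i})"
    by (intro sum_singletons) (auto dest: VC_D[OF assms(1)])
  finally show ?thesis unfolding clB_def bs_single .
qed

lemma VC_square:
  assumes "v \<in> VC n"
  shows "cl_mul n eps v v = cl_scale (clQ n eps v) cl_one"
proof (rule ext)
  fix K
  have "cl_add (cl_mul n eps v v) (cl_mul n eps v v) K = cl_scale (2 * clQ n eps v) cl_one K"
    using VC_anticomm[OF assms assms, of eps] unfolding clQ_def by simp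
  then show "cl_mul n eps v v K = cl_scale (clQ n eps v) cl_one K"
    unfolding cl_add_def cl_scale_def by simp
qed

lemma VC_anti0:
  assumes "v \<in> VC n" "w \<in> VC n" "clB n eps v w = 0"
  shows "cl_mul n eps v w = cl_scale (-1) (cl_mul n eps w v)"
proof (rule ext)
  fix K
  have "cl_add (cl_mul n eps v w) (cl_mul n eps w v) K = 0"
    using VC_anticomm[OF assms(1,2), of eps] assms(3) unfolding cl_scale_def by simp
  then show "cl_mul n eps v w K = cl_scale (-1) (cl_mul n eps w v) K"
    unfolding cl_add_def cl_scale_def by (simp add: add_eq_0_iff)
qed

lemma ds_VC: "i < n \<Longrightarrow> ds i \<in> VC n"
  unfolding VC_def CL_def ds_def dl_def by auto

lemma clB_ds: "i < n \<Longrightarrow> j < n \<Longrightarrow> clB n eps (ds i) (ds j) = (if i = j then complex_of_real (eps i) else 0)"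
proof -
  assume a: "i < n" "j < n"
  have "clB n eps (ds i) (ds j) = (\<Sum>k<n. if k = i then (if i = j then complex_of_real (eps i) else 0) else 0)"
    unfolding clB_def ds_def dl_def by (intro sum.cong refl) auto
  also have "\<dots> = (if i = j then complex_of_real (eps i) else 0)" using a by simp
  finally show ?thesis .
qed




lemma tau_scale: "tau (cl_scale c a) = c * tau a" unfolding tau_def cl_scale_def by simp
lemma tau_add: "tau (cl_add a b) = tau a + tau b" unfolding tau_def cl_add_def by simp
lemma tau_one: "tau cl_one = 1" unfolding tau_def cl_one_def by simp
lemma scale_scale: "cl_scale a (cl_scale b x) = cl_scale (a * b) x" unfolding cl_scale_def by (simp add: mult_ac)
lemma scale_one[simp]: "cl_scale 1 x = x" unfolding cl_scale_def by simp

lemma mul_scale_one: "a \<in> CL n \<Longrightarrow> cl_mul n eps a (cl_scale c cl_one) = cl_scale c a"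
  by (simp add: cl_mul_scale_right cl_mul_one_right)

lemma conj_prod:
  assumes "u \<in> CL n" "\<forall>i\<in>set L. cl_mul n eps u (g i) = cl_scale (s i) (cl_mul n eps (g i) u)"
  shows "cl_mul n eps u (cl_prod n eps (map g L)) = cl_scale (\<Prod>i\<leftarrow>L. s i) (cl_mul n eps (cl_prod n eps (map g L)) u)"
  using assms(2)
proof (induction L)
  case Nil then show ?case using assms(1) by (simp add: cl_mul_one_left cl_mul_one_right)
next
  case (Cons i L)
  let ?P = "cl_prod n eps (map g L)"
  have IH: "cl_mul n eps u ?P = cl_scale (\<Prod>i\<leftarrow>L. s i) (cl_mul n eps ?P u)" using Cons by auto
  have hi: "cl_mul n eps u (g i) = cl_scale (s i) (cl_mul n eps (g i) u)" using Cons.prems by auto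
  have "cl_mul n eps u (cl_prod n eps (map g (i # L))) = cl_mul n eps (cl_mul n eps u (g i)) ?P"
    by (simp add: cl_mul_assoc)
  also have "\<dots> = cl_scale (s i) (cl_mul n eps (g i) (cl_mul n eps u ?P))"
    unfolding hi cl_mul_scale_left cl_mul_assoc ..
  also have "\<dots> = cl_scale (s i * (\<Prod>i\<leftarrow>L. s i)) (cl_mul n eps (g i) (cl_mul n eps ?P u))"
    unfolding IH cl_mul_scale_right scale_scale ..
  also have "\<dots> = cl_scale (\<Prod>i\<leftarrow>i # L. s i) (cl_mul n eps (cl_prod n eps (map g (i # L))) u)"
    by (simp add: cl_mul_assoc)
  finally show ?case .
qed

lemma trace_zero:
  assumes u: "u \<in> CL n" and uu: "cl_mul n eps u u = cl_scale cu cl_one" and cu: "cu \<noteq> 0"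
    and conj: "\<forall>i\<in>set L. cl_mul n eps u (g i) = cl_scale (s i) (cl_mul n eps (g i) u)"
    and S: "(\<Prod>i\<leftarrow>L. s i) \<noteq> 1"
  shows "tau (cl_prod n eps (map g L)) = 0"
proof -
  let ?P = "cl_prod n eps (map g L)"
  let ?S = "\<Prod>i\<leftarrow>L. s i"
  have PC: "?P \<in> CL n" by (rule cl_prod_CL)
  have "cu * tau ?P = tau (cl_mul n eps ?P (cl_mul n eps u u))"
    unfolding uu mul_scale_one[OF PC] tau_scale ..
  also have "\<dots> = tau (cl_mul n eps u (cl_mul n eps ?P u))"
    by (simp add: cl_mul_assoc[symmetric] tau_comm[of n eps _ u])
  also have "\<dots> = tau (cl_mul n eps (cl_scale ?S (cl_mul n eps ?P u)) u)"
    unfolding cl_mul_assoc[symmetric] conj_prod[OF u conj] ..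
  also have "\<dots> = ?S * (cu * tau ?P)"
    unfolding cl_mul_scale_left tau_scale cl_mul_assoc uu mul_scale_one[OF PC] ..
  finally have "(1 - ?S) * (cu * tau ?P) = 0" by (simp add: algebra_simps)
  then show ?thesis using S cu by simp
qed

lemma rev_prod:
  assumes "set ws \<subseteq> VC n"
  shows "cl_mul n eps (cl_prod n eps (rev ws)) (cl_prod n eps ws) = cl_scale (\<Prod>w\<leftarrow>ws. clQ n eps w) cl_one"
  using assms
proof (induction ws)
  case Nil then show ?case by (simp add: cl_mul_one_left CL_one)
next
  case (Cons w ws)
  let ?R = "cl_prod n eps (rev ws)" and ?P = "cl_prod n eps ws"
  have w: "w \<in> VC n" and IH: "cl_mul n eps ?R ?P = cl_scale (\<Prod>w\<leftarrow>ws. clQ n eps w) cl_one" using Cons by auto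
  have "cl_mul n eps (cl_prod n eps (rev (w # ws))) (cl_prod n eps (w # ws)) = cl_mul n eps ?R (cl_mul n eps (cl_mul n eps w w) ?P)"
    by (simp add: cl_prod_append cl_mul_one_right[OF VC_CL[OF w]] cl_mul_one_left[OF cl_mul_CL] cl_mul_assoc)
  also have "\<dots> = cl_scale (clQ n eps w) (cl_mul n eps ?R ?P)"
    unfolding VC_square[OF w] cl_mul_scale_left cl_mul_scale_right cl_mul_one_left[OF cl_prod_CL] ..
  also have "\<dots> = cl_scale (\<Prod>w\<leftarrow>w # ws. clQ n eps w) cl_one"
    unfolding IH scale_scale by simp
  finally show ?case .
qed

lemma T_prod:
  assumes "set ws \<subseteq> CL n"
  shows "cl_transpose (cl_prod n eps ws) = cl_prod n eps (rev (map cl_transpose ws))"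
  using assms
proof (induction ws)
  case Nil then show ?case by (simp add: transpose_one)
next
  case (Cons w ws)
  then have w: "w \<in> CL n" by auto
  show ?case using Cons
    by (simp add: transpose_mul cl_prod_append cl_mul_one_right[OF transpose_CL[OF w]])
qed

lemma sign_list: "(\<Prod>i\<leftarrow>L. (if i = j then 1 else -1::complex)) = (-1) ^ length (filter (\<lambda>i. i \<noteq> j) L)"
  by (induction L) auto

lemma neg1_pow_ne1: "odd k \<Longrightarrow> (-1::complex) ^ k \<noteq> 1" by simp




lemma cl_sum_empty[simp]: "cl_sum f {} = cl_zero" unfolding cl_sum_def cl_zero_def by simp
lemma cl_sum_insert: "finite A \<Longrightarrow> x \<notin> A \<Longrightarrow> cl_sum f (insert x A) = cl_add (f x) (cl_sum f A)"
  unfolding cl_sum_def cl_add_def by simp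
lemma tau_sum: "tau (cl_sum f A) = (\<Sum>i\<in>A. tau (f i))" unfolding tau_def cl_sum_def ..
lemma transpose_sum: "cl_transpose (cl_sum f A) = cl_sum (\<lambda>i. cl_transpose (f i)) A"
  unfolding cl_transpose_def cl_sum_def by (simp add: sum_distrib_left)
lemma cl_sum_cong: "(\<And>i. i \<in> A \<Longrightarrow> f i = h i) \<Longrightarrow> cl_sum f A = cl_sum h A"
  unfolding cl_sum_def by (intro ext sum.cong) auto
lemma scale_zero: "cl_scale 0 x = cl_zero" unfolding cl_scale_def cl_zero_def by simp

locale RS =
  fixes n :: nat and eps :: "nat \<Rightarrow> real" and \<sigma> :: "cl \<Rightarrow> cl"
  assumes ev: "even n" and epsv: "\<forall>i<n. eps i = 1 \<or> eps i = -1" and rs: "real_structure n eps \<sigma>"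
begin

lemma s_CL: "a \<in> CL n \<Longrightarrow> \<sigma> a \<in> CL n" using rs unfolding real_structure_def by blast
lemma s_inv: "a \<in> CL n \<Longrightarrow> \<sigma> (\<sigma> a) = a" using rs unfolding real_structure_def by blast
lemma s_add: "a \<in> CL n \<Longrightarrow> b \<in> CL n \<Longrightarrow> \<sigma> (cl_add a b) = cl_add (\<sigma> a) (\<sigma> b)" using rs unfolding real_structure_def by blast
lemma s_scale: "a \<in> CL n \<Longrightarrow> \<sigma> (cl_scale c a) = cl_scale (cnj c) (\<sigma> a)" using rs unfolding real_structure_def by blast
lemma s_mul: "a \<in> CL n \<Longrightarrow> b \<in> CL n \<Longrightarrow> \<sigma> (cl_mul n eps a b) = cl_mul n eps (\<sigma> a) (\<sigma> b)" using rs unfolding real_structure_def by blast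
lemma s_one: "\<sigma> cl_one = cl_one" using rs unfolding real_structure_def by blast
lemma s_VC: "v \<in> VC n \<Longrightarrow> \<sigma> v \<in> VC n" using rs unfolding real_structure_def by blast

lemma eps_nz: "i < n \<Longrightarrow> eps i \<noteq> 0" using epsv by force

lemma s_zero: "\<sigma> cl_zero = cl_zero"
  using s_scale[OF CL_one, of 0] by (simp add: scale_zero)

lemma s_sum: "finite A \<Longrightarrow> (\<And>i. i \<in> A \<Longrightarrow> f i \<in> CL n) \<Longrightarrow> \<sigma> (cl_sum f A) = cl_sum (\<lambda>i. \<sigma> (f i)) A"
proof (induction A rule: finite_induct)
  case empty then show ?case by (simp add: s_zero)
next
  case (insert x A)
  then show ?case by (simp add: cl_sum_insert s_add CL_sum)
qed

lemma s_prod: "set ws \<subseteq> CL n \<Longrightarrow> \<sigma> (cl_prod n eps ws) = cl_prod n eps (map \<sigma> ws)"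
  by (induction ws) (auto simp: s_one s_mul cl_prod_CL)

definition g :: "nat \<Rightarrow> cl" where "g i = \<sigma> (ds i)"

lemma g_eq: "g = \<sigma> \<circ> ds" by (rule ext) (simp add: g_def)

lemma g_VC: "i < n \<Longrightarrow> g i \<in> VC n" unfolding g_def by (rule s_VC[OF ds_VC])
lemma g_CL: "i < n \<Longrightarrow> g i \<in> CL n" using g_VC VC_CL by blast

lemma g_anti: "i < n \<Longrightarrow> j < n \<Longrightarrow> i \<noteq> j \<Longrightarrow> cl_mul n eps (g j) (g i) = cl_scale (-1) (cl_mul n eps (g i) (g j))"
proof -
  assume a: "i < n" "j < n" "i \<noteq> j"
  have "cl_mul n eps (ds j) (ds i) = cl_scale (-1) (cl_mul n eps (ds i) (ds j))"
    by (rule VC_anti0) (use a in \<open>auto simp: ds_VC clB_ds\<close>)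
  then have "\<sigma> (cl_mul n eps (ds j) (ds i)) = \<sigma> (cl_scale (-1) (cl_mul n eps (ds i) (ds j)))" by simp
  then show ?thesis unfolding g_def using a
    by (simp add: s_mul s_scale cl_mul_CL ds_VC VC_CL)
qed

lemma g_sq: "j < n \<Longrightarrow> cl_mul n eps (g j) (g j) = cl_scale (complex_of_real (eps j)) cl_one"
proof -
  assume a: "j < n"
  have "cl_mul n eps (ds j) (ds j) = cl_scale (complex_of_real (eps j)) cl_one"
    using VC_square[OF ds_VC[OF a], of eps] clB_ds[OF a a, of eps] unfolding clQ_def by simp
  then have "\<sigma> (cl_mul n eps (ds j) (ds j)) = \<sigma> (cl_scale (complex_of_real (eps j)) cl_one)" by simp
  then show ?thesis unfolding g_def using a
    by (simp add: s_mul s_scale ds_VC VC_CL s_one CL_one)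
qed

lemma length_filter_sorted: "finite K \<Longrightarrow> length (filter P (sorted_list_of_set K)) = card {x\<in>K. P x}"
proof -
  assume f: "finite K"
  have "length (filter P (sorted_list_of_set K)) = card (set (filter P (sorted_list_of_set K)))"
    by (rule distinct_card[symmetric]) simp
  also have "set (filter P (sorted_list_of_set K)) = {x\<in>K. P x}" using f by auto
  finally show ?thesis .
qed

lemma tau_s_dl:
  assumes K: "K \<subseteq> {..<n}" "K \<noteq> {}"
  shows "tau (\<sigma> (dl K)) = 0"
proof -
  let ?L = "sorted_list_of_set K"
  have fK: "finite K" using K by (auto intro: finite_sub)
  have setL: "set ?L = K" using fK by simp
  have "\<sigma> (dl K) = \<sigma> (cl_prod n eps (map ds ?L))" using dl_prod[OF K(1), of eps] by simp
  also have "\<dots> = cl_prod n eps (map g ?L)"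
    using K setL by (subst s_prod) (auto simp: g_eq ds_VC VC_CL)
  finally have e: "\<sigma> (dl K) = cl_prod n eps (map g ?L)" .
  obtain j where j: "j < n" and par: "odd (card {x\<in>K. x \<noteq> j})"
  proof (cases "even (card K)")
    case True
    obtain j where jK: "j \<in> K" using K by blast
    have "{x\<in>K. x \<noteq> j} = K - {j}" by auto
    then have c: "card {x\<in>K. x \<noteq> j} = card K - 1" using jK fK by simp
    have "card K > 0" using fK K by (simp add: card_gt_0_iff)
    then have "odd (card K - 1)" using True by (cases "card K") auto
    then show ?thesis using that[of j] jK K(1) c by (simp add: subset_iff)
  next
    case False
    then have "K \<noteq> {..<n}" using ev by auto
    then have "\<exists>j. j < n \<and> j \<notin> K" using K(1) by (metis lessThan_iff subsetI subset_antisym)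
    then obtain j where "j < n" "j \<notin> K" by blast
    moreover have "{x\<in>K. x \<noteq> j} = K" using \<open>j \<notin> K\<close> by auto
    ultimately show ?thesis using that[of j] False by simp
  qed
  have "tau (cl_prod n eps (map g ?L)) = 0"
  proof (rule trace_zero[where u = "g j" and cu = "complex_of_real (eps j)" and s = "\<lambda>i. if i = j then 1 else -1"])
    show "g j \<in> CL n" using j by (rule g_CL)
    show "cl_mul n eps (g j) (g j) = cl_scale (complex_of_real (eps j)) cl_one" using j by (rule g_sq)
    show "complex_of_real (eps j) \<noteq> 0" using eps_nz[OF j] by simp
    show "\<forall>i\<in>set ?L. cl_mul n eps (g j) (g i) = cl_scale (if i = j then 1 else - 1) (cl_mul n eps (g i) (g j))"
    proof
      fix i assume "i \<in> set ?L"
      then have i: "i < n" using K setL by auto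
      show "cl_mul n eps (g j) (g i) = cl_scale (if i = j then 1 else - 1) (cl_mul n eps (g i) (g j))"
      proof (cases "i = j")
        case False
        then show ?thesis using g_anti[OF i j False] by simp
      qed simp
    qed
    show "(\<Prod>i\<leftarrow>?L. if i = j then 1 else - 1) \<noteq> (1::complex)"
      unfolding sign_list length_filter_sorted[OF fK] using par by simp
  qed
  then show ?thesis using e by simp
qed

lemma tau_s: "a \<in> CL n \<Longrightarrow> tau (\<sigma> a) = cnj (tau a)"
proof -
  assume a: "a \<in> CL n"
  have "\<sigma> a = \<sigma> (cl_sum (\<lambda>K. cl_scale (a K) (dl K)) (Pow {..<n}))" using CL_decomp[OF a] by simp
  also have "\<dots> = cl_sum (\<lambda>K. \<sigma> (cl_scale (a K) (dl K))) (Pow {..<n})"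
    by (rule s_sum) (auto simp: CL_scale dl_CL)
  also have "\<dots> = cl_sum (\<lambda>K. cl_scale (cnj (a K)) (\<sigma> (dl K))) (Pow {..<n})"
  proof (rule cl_sum_cong)
    fix K assume "K \<in> Pow {..<n}"
    then have "dl K \<in> CL n" by (simp add: dl_CL)
    then show "\<sigma> (cl_scale (a K) (dl K)) = cl_scale (cnj (a K)) (\<sigma> (dl K))" by (rule s_scale)
  qed
  finally have "tau (\<sigma> a) = (\<Sum>K\<in>Pow {..<n}. cnj (a K) * tau (\<sigma> (dl K)))"
    by (simp add: tau_sum tau_scale)
  also have "\<dots> = (\<Sum>K\<in>Pow {..<n}. if K = {} then cnj (a {}) else 0)"
    by (rule sum.cong) (auto simp: tau_s_dl dl_empty s_one tau_one)
  also have "\<dots> = cnj (tau a)" unfolding tau_def by simp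
  finally show ?thesis .
qed

lemma s_T_dl:
  assumes K: "K \<subseteq> {..<n}"
  shows "\<sigma> (cl_transpose (dl K)) = cl_transpose (\<sigma> (dl K))"
proof -
  let ?L = "sorted_list_of_set K"
  have fK: "finite K" using K by (auto intro: finite_sub)
  have setL: "set ?L = K" using fK by simp
  have dsV: "\<forall>i\<in>set ?L. ds i \<in> VC n" "\<forall>i\<in>set ?L. g i \<in> VC n" using setL K by (auto simp: ds_VC g_VC)
  have c1: "set (map ds ?L) \<subseteq> CL n" "set (map g ?L) \<subseteq> CL n" using dsV VC_CL by auto
  have "\<sigma> (cl_transpose (dl K)) = \<sigma> (cl_prod n eps (rev (map cl_transpose (map ds ?L))))"
    using dl_prod[OF K, of eps] T_prod[OF c1(1)] by simp
  also have "\<dots> = \<sigma> (cl_prod n eps (rev (map ds ?L)))"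
  proof -
    have "map cl_transpose (map ds ?L) = map ds ?L" using dsV by (auto simp: transpose_VC)
    then show ?thesis by (simp only:)
  qed
  also have "\<dots> = cl_prod n eps (rev (map g ?L))"
    using dsV by (subst s_prod) (auto simp: VC_CL g_eq rev_map)
  also have "\<dots> = cl_transpose (cl_prod n eps (map g ?L))"
  proof -
    have "map cl_transpose (map g ?L) = map g ?L" using dsV by (auto simp: transpose_VC)
    then show ?thesis unfolding T_prod[OF c1(2)] by (simp only:)
  qed
  also have "\<dots> = cl_transpose (\<sigma> (dl K))"
    using dl_prod[OF K, of eps] c1 by (simp add: s_prod g_eq)
  finally show ?thesis .
qed

lemma s_T: "a \<in> CL n \<Longrightarrow> \<sigma> (cl_transpose a) = cl_transpose (\<sigma> a)"
proof -
  assume a: "a \<in> CL n"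
  let ?D = "cl_sum (\<lambda>K. cl_scale (a K) (dl K)) (Pow {..<n})"
  have "\<sigma> (cl_transpose a) = \<sigma> (cl_transpose ?D)" using CL_decomp[OF a] by simp
  also have "\<dots> = cl_sum (\<lambda>K. cl_scale (cnj (a K)) (\<sigma> (cl_transpose (dl K)))) (Pow {..<n})"
    unfolding transpose_sum transpose_scale
  proof (subst s_sum)
    show "cl_sum (\<lambda>i. \<sigma> (cl_scale (a i) (cl_transpose (dl i)))) (Pow {..<n}) = cl_sum (\<lambda>K. cl_scale (cnj (a K)) (\<sigma> (cl_transpose (dl K)))) (Pow {..<n})"
      by (rule cl_sum_cong) (simp add: s_scale transpose_CL dl_CL)
  qed (auto simp: CL_scale dl_CL transpose_CL)
  also have "\<dots> = cl_sum (\<lambda>K. cl_scale (cnj (a K)) (cl_transpose (\<sigma> (dl K)))) (Pow {..<n})"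
    unfolding cl_sum_def by (intro ext sum.cong refl) (simp add: s_T_dl)
  also have "\<dots> = cl_transpose (\<sigma> ?D)"
  proof (subst s_sum)
    show "cl_sum (\<lambda>K. cl_scale (cnj (a K)) (cl_transpose (\<sigma> (dl K)))) (Pow {..<n}) = cl_transpose (cl_sum (\<lambda>i. \<sigma> (cl_scale (a i) (dl i))) (Pow {..<n}))"
      unfolding transpose_sum by (rule cl_sum_cong) (simp add: s_scale transpose_scale dl_CL)
  qed (auto simp: CL_scale dl_CL)
  finally show ?thesis using CL_decomp[OF a] by simp
qed

end



lemma transpose_zero: "cl_transpose cl_zero = cl_zero" unfolding cl_transpose_def cl_zero_def by simp

lemma mul_sum_right: "finite A \<Longrightarrow> cl_mul n eps x (cl_sum f A) = cl_sum (\<lambda>i. cl_mul n eps x (f i)) A"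
  by (induction A rule: finite_induct) (auto simp: cl_sum_insert cl_mul_add_right cl_zero_def[symmetric])

lemma prod_pm1: "\<forall>x\<in>set xs. x = 1 \<or> x = -1 \<Longrightarrow> prod_list xs = (1::complex) \<or> prod_list xs = -1"
  by (induction xs) auto

lemma card_minus_j: "finite I \<Longrightarrow> card {x\<in>I. x \<noteq> j} = card I - (if j \<in> I then 1 else 0)"
proof -
  assume f: "finite I"
  have "{x\<in>I. x \<noteq> j} = I - {j}" by auto
  then show ?thesis using f by (auto simp: card_Diff_singleton_if)
qed

context RS
begin

abbreviation h where "h \<equiv> sprod n eps \<sigma>"

lemma TC: "a \<in> CL n \<Longrightarrow> cl_transpose a \<in> CL n" by (rule transpose_CL)

lemma herm: "hermitian_form n h"
  unfolding hermitian_form_def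
proof (intro conjI ballI allI)
  fix a b c assume a: "a \<in> CL n" and b: "b \<in> CL n" and c: "c \<in> CL n"
  show "h (cl_add a b) c = h a c + h b c"
    unfolding sprod_def transpose_add s_add[OF TC[OF a] TC[OF b]] cl_mul_add_left tau_add ..
  show "h a (cl_add b c) = h a b + h a c"
    unfolding sprod_def cl_mul_add_right tau_add ..
next
  fix z a b assume a: "a \<in> CL n" and b: "b \<in> CL n"
  show "h (cl_scale z a) b = cnj z * h a b"
    unfolding sprod_def transpose_scale s_scale[OF TC[OF a]] cl_mul_scale_left tau_scale ..
  show "h a (cl_scale z b) = z * h a b"
    unfolding sprod_def cl_mul_scale_right tau_scale ..
next
  fix a b assume a: "a \<in> CL n" and b: "b \<in> CL n"
  have sa: "\<sigma> (cl_transpose a) \<in> CL n" by (rule s_CL[OF TC[OF a]])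
  have "cnj (h a b) = tau (\<sigma> (cl_mul n eps (\<sigma> (cl_transpose a)) b))"
    unfolding sprod_def by (rule tau_s[OF cl_mul_CL, symmetric])
  also have "\<dots> = tau (cl_mul n eps (cl_transpose a) (\<sigma> b))"
    unfolding s_mul[OF sa b] s_inv[OF TC[OF a]] ..
  also have "\<dots> = tau (cl_transpose (cl_mul n eps (cl_transpose a) (\<sigma> b)))"
    by (rule tau_transpose[symmetric])
  also have "\<dots> = tau (cl_mul n eps (\<sigma> (cl_transpose b)) a)"
    unfolding transpose_mul transpose_transpose s_T[OF b] ..
  finally show "h b a = cnj (h a b)" unfolding sprod_def by simp
qed

lemma epsp_nz: "J \<subseteq> {..<n} \<Longrightarrow> epsp eps J \<noteq> 0"
  unfolding epsp_def using eps_nz by (auto simp: prod_zero_iff finite_sub subset_iff)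

lemma bs_nz: "J \<subseteq> {..<n} \<Longrightarrow> blade_sign eps J J \<noteq> 0"
  unfolding bs_def2 using epsp_nz by simp

lemma nondeg: "nondegenerate_form n h"
  unfolding nondegenerate_form_def
proof (intro ballI impI)
  fix a assume a: "a \<in> CL n" and hz: "\<forall>b\<in>CL n. h a b = 0"
  let ?c = "\<sigma> (cl_transpose a)"
  have cC: "?c \<in> CL n" by (rule s_CL[OF TC[OF a]])
  have c0: "?c = cl_zero"
  proof (rule ext)
    fix J show "?c J = cl_zero J"
    proof (cases "J \<subseteq> {..<n}")
      case True
      have "0 = h a (dl J)" using hz dl_CL[OF True] by simp
      also have "\<dots> = (\<Sum>I\<in>Pow {..<n}. if I = J then blade_sign eps J J * ?c J else 0)"
        unfolding sprod_def tau_mul by (rule sum.cong) (auto simp: dl_def)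
      also have "\<dots> = blade_sign eps J J * ?c J" using True by simp
      finally show ?thesis using bs_nz[OF True] by (simp add: cl_zero_def)
    next
      case False then show ?thesis using CL_D[OF cC] by (simp add: cl_zero_def)
    qed
  qed
  have "cl_transpose a = cl_zero" using s_inv[OF TC[OF a]] c0 s_zero by simp
  then show "a = cl_zero" using transpose_transpose[of a] transpose_zero by simp
qed

lemma VR_part: "v \<in> VR n \<Longrightarrow> h v v = Q_sigma n eps \<sigma> v"
proof -
  assume "v \<in> VR n"
  then have v: "v \<in> VC n" unfolding VR_def by blast
  show ?thesis unfolding sprod_def Q_sigma_def transpose_VC[OF v] by (rule tau_VC[OF s_VC[OF v] v])
qed

lemma Vs_part: "v \<in> V_sigma n \<sigma> \<Longrightarrow> h v v = clQ n eps v"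
proof -
  assume "v \<in> V_sigma n \<sigma>"
  then have v: "v \<in> VC n" and sv: "\<sigma> v = v" unfolding V_sigma_def by auto
  show ?thesis unfolding sprod_def clQ_def transpose_VC[OF v] sv by (rule tau_VC[OF v v])
qed

lemma T_s_prod:
  assumes "set ws \<subseteq> V_sigma n \<sigma>"
  shows "\<sigma> (cl_transpose (cl_prod n eps ws)) = cl_prod n eps (rev ws)"
proof -
  have V: "\<forall>w\<in>set ws. w \<in> VC n \<and> \<sigma> w = w" using assms unfolding V_sigma_def by auto
  have C: "set ws \<subseteq> CL n" using V VC_CL by auto
  have "map cl_transpose ws = ws" using V by (induction ws) (auto simp: transpose_VC)
  then have "cl_transpose (cl_prod n eps ws) = cl_prod n eps (rev ws)" unfolding T_prod[OF C] by simp
  moreover have "map \<sigma> (rev ws) = rev ws" using V by (induction ws) auto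
  ultimately show ?thesis using C by (simp add: s_prod)
qed

lemma ws_part:
  assumes "set ws \<subseteq> V_sigma n \<sigma>"
  shows "h (cl_prod n eps ws) (cl_prod n eps ws) = (\<Prod>w\<leftarrow>ws. clQ n eps w)"
proof -
  have V: "set ws \<subseteq> VC n" using assms unfolding V_sigma_def by auto
  show ?thesis unfolding sprod_def T_s_prod[OF assms] rev_prod[OF V] tau_scale tau_one by simp
qed

lemma h_sum_right: "finite A \<Longrightarrow> h a (cl_sum f A) = (\<Sum>i\<in>A. h a (f i))"
  unfolding sprod_def by (simp add: mul_sum_right tau_sum)

lemma h_scale_right: "h a (cl_scale z b) = z * h a b"
  unfolding sprod_def cl_mul_scale_right tau_scale ..

lemma h_zero_right: "h a cl_zero = 0"
  unfolding sprod_def by (simp add: tau_def, simp add: cl_zero_def)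

end



lemma par1: "(a::nat) + 1 = b \<Longrightarrow> even b \<Longrightarrow> odd a" by presburger
lemma par2: "(a::nat) + 2 = b \<Longrightarrow> odd b \<Longrightarrow> odd a" by presburger
lemma par3: "(c::nat) + 2 * x = b \<Longrightarrow> even c \<Longrightarrow> even b" by presburger

context RS
begin

lemma pon_D:
  assumes "pon_basis_Vsigma n eps \<sigma> e"
  shows "\<And>i. i < n \<Longrightarrow> e i \<in> V_sigma n \<sigma>" "\<And>i. i < n \<Longrightarrow> e i \<in> VC n"
    "\<And>i j. i < n \<Longrightarrow> j < n \<Longrightarrow> i \<noteq> j \<Longrightarrow> clB n eps (e i) (e j) = 0"
    "\<And>i. i < n \<Longrightarrow> clQ n eps (e i) = 1 \<or> clQ n eps (e i) = -1"
  using assms unfolding pon_basis_Vsigma_def V_sigma_def by auto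

lemma bl_set: "I \<subseteq> {..<n} \<Longrightarrow> pon_basis_Vsigma n eps \<sigma> e \<Longrightarrow> set (map e (sorted_list_of_set I)) \<subseteq> V_sigma n \<sigma>"
proof -
  assume I: "I \<subseteq> {..<n}" and e: "pon_basis_Vsigma n eps \<sigma> e"
  have "set (sorted_list_of_set I) = I" using finite_sub[OF I] by simp
  then show ?thesis using pon_D(1)[OF e] I by auto
qed

lemma h_bl:
  assumes e: "pon_basis_Vsigma n eps \<sigma> e" and I: "I \<subseteq> {..<n}"
  shows "h (blade_of n eps e I) (blade_of n eps e J) =
    tau (cl_prod n eps (map e (rev (sorted_list_of_set I) @ sorted_list_of_set J)))"
  unfolding sprod_def blade_of_def T_s_prod[OF bl_set[OF I e]]
  by (simp add: cl_prod_append rev_map)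

lemma bl_norm:
  assumes e: "pon_basis_Vsigma n eps \<sigma> e" and I: "I \<subseteq> {..<n}"
  shows "h (blade_of n eps e I) (blade_of n eps e I) = 1 \<or> h (blade_of n eps e I) (blade_of n eps e I) = -1"
  unfolding blade_of_def ws_part[OF bl_set[OF I e]]
proof (intro prod_pm1 ballI)
  fix x assume "x \<in> set (map (clQ n eps) (map e (sorted_list_of_set I)))"
  then obtain i where "i \<in> I" "x = clQ n eps (e i)" using finite_sub[OF I] by auto
  then show "x = 1 \<or> x = -1" using pon_D(4)[OF e] I by auto
qed

lemma bl_orth:
  assumes e: "pon_basis_Vsigma n eps \<sigma> e" and I: "I \<subseteq> {..<n}" and J: "J \<subseteq> {..<n}" and IJ: "I \<noteq> J"
  shows "h (blade_of n eps e I) (blade_of n eps e J) = 0"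
proof -
  let ?L = "rev (sorted_list_of_set I) @ sorted_list_of_set J"
  have fI: "finite I" and fJ: "finite J" using finite_sub[OF I] finite_sub[OF J] by auto
  have setL: "set ?L = I \<union> J" using fI fJ by simp
  have cnt: "length (filter (\<lambda>i. i \<noteq> j) ?L) = card {x\<in>I. x \<noteq> j} + card {x\<in>J. x \<noteq> j}" for j
    using length_filter_sorted[OF fI] length_filter_sorted[OF fJ] by (simp add: rev_filter[symmetric])
  obtain j where j: "j < n" and par: "odd (card {x\<in>I. x \<noteq> j} + card {x\<in>J. x \<noteq> j})"
  proof (cases "even (card I + card J)")
    case True
    have "sd I J \<noteq> {}" using IJ unfolding sd_def by auto
    then obtain j where jd: "j \<in> sd I J" by blast
    have "j \<in> {..<n}" by (rule subsetD[OF sd_Pow[OF I J] jd])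
    then have jn: "j < n" by simp
    have "card {x\<in>I. x \<noteq> j} + card {x\<in>J. x \<noteq> j} + 1 = card I + card J"
    proof (cases "j \<in> I")
      case True
      then have "j \<notin> J" using jd unfolding sd_def by auto
      moreover have "card I > 0" using True fI by (auto simp: card_gt_0_iff)
      ultimately show ?thesis using True fI fJ by (simp add: card_minus_j)
    next
      case False
      then have "j \<in> J" using jd unfolding sd_def by auto
      moreover have "card J > 0" using \<open>j \<in> J\<close> fJ by (auto simp: card_gt_0_iff)
      ultimately show ?thesis using False fI fJ by (simp add: card_minus_j)
    qed
    then have "odd (card {x\<in>I. x \<noteq> j} + card {x\<in>J. x \<noteq> j})" using True
      by (rule par1)
    then show ?thesis using that jn by blast
  next
    case False
    have "sd I J \<noteq> {..<n}"
    proof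
      assume "sd I J = {..<n}"
      then have "card (sd I J) = n" by simp
      then have "even (card (sd I J))" using ev by simp
      then have "even (card I + card J)" using par3[OF card_sd[OF fI fJ]] by blast
      then show False using False by simp
    qed
    then have "{..<n} - sd I J \<noteq> {}" using sd_Pow[OF I J] by blast
    then obtain j where "j \<in> {..<n} - sd I J" by blast
    then have j: "j < n" "j \<notin> sd I J" by auto
    then have jj: "j \<in> I \<longleftrightarrow> j \<in> J" unfolding sd_def by auto
    have "odd (card {x\<in>I. x \<noteq> j} + card {x\<in>J. x \<noteq> j})"
    proof (cases "j \<in> I")
      case True
      then have "card I > 0" "card J > 0" using jj fI fJ by (auto simp: card_gt_0_iff)
      then have "card {x\<in>I. x \<noteq> j} + card {x\<in>J. x \<noteq> j} + 2 = card I + card J"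
        using True jj fI fJ by (simp add: card_minus_j)
      from par2[OF this] show ?thesis using False by simp
    next
      case f: False
      then have "card {x\<in>I. x \<noteq> j} + card {x\<in>J. x \<noteq> j} = card I + card J"
        using jj fI fJ by (simp add: card_minus_j)
      then show ?thesis using False by simp
    qed
    then show ?thesis using that j by blast
  qed
  have ejV: "e j \<in> VC n" using pon_D(2)[OF e j] .
  have "tau (cl_prod n eps (map e ?L)) = 0"
  proof (rule trace_zero[where u = "e j" and cu = "clQ n eps (e j)" and s = "\<lambda>i. if i = j then 1 else -1"])
    show "e j \<in> CL n" using ejV by (rule VC_CL)
    show "cl_mul n eps (e j) (e j) = cl_scale (clQ n eps (e j)) cl_one" using ejV by (rule VC_square)
    show "clQ n eps (e j) \<noteq> 0" using pon_D(4)[OF e j] by auto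
    show "\<forall>i\<in>set ?L. cl_mul n eps (e j) (e i) = cl_scale (if i = j then 1 else - 1) (cl_mul n eps (e i) (e j))"
    proof
      fix i assume "i \<in> set ?L"
      then have i: "i < n" using I J setL by auto
      show "cl_mul n eps (e j) (e i) = cl_scale (if i = j then 1 else - 1) (cl_mul n eps (e i) (e j))"
      proof (cases "i = j")
        case False
        have "clB n eps (e j) (e i) = 0" using pon_D(3)[OF e j i] False by simp
        then show ?thesis using VC_anti0[OF ejV pon_D(2)[OF e i]] False by simp
      qed simp
    qed
    show "(\<Prod>i\<leftarrow>?L. if i = j then 1 else - 1) \<noteq> (1::complex)"
      unfolding sign_list cnt using par by simp
  qed
  then show ?thesis unfolding h_bl[OF e I] .
qed

end



interpretation cls: vector_space "cl_scale :: complex \<Rightarrow> cl \<Rightarrow> cl"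
  by unfold_locales (auto simp: cl_scale_def algebra_simps plus_fun_def)

lemma sum_fun_app: "sum f A x = (\<Sum>i\<in>A. f i x)"
  by (induction A rule: infinite_finite_induct) (auto simp: plus_fun_def zero_fun_def)

lemma cl_sum_eq: "cl_sum f A = sum f A"
  unfolding cl_sum_def by (rule ext) (simp add: sum_fun_app)

lemma cl_zero_eq: "cl_zero = 0" unfolding cl_zero_def zero_fun_def ..

lemma CL_span: "a \<in> CL n \<Longrightarrow> a \<in> cls.span (dl ` Pow {..<n})"
proof -
  assume a: "a \<in> CL n"
  have "a = sum (\<lambda>K. cl_scale (a K) (dl K)) (Pow {..<n})"
    using CL_decomp[OF a] unfolding cl_sum_eq .
  also have "\<dots> \<in> cls.span (dl ` Pow {..<n})"
  proof (rule cls.span_sum)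
    fix K assume "K \<in> Pow {..<n}"
    then have "dl K \<in> cls.span (dl ` Pow {..<n})" by (intro cls.span_base) simp
    then show "cl_scale (a K) (dl K) \<in> cls.span (dl ` Pow {..<n})" by (rule cls.span_scale)
  qed
  finally show ?thesis .
qed

context RS
begin

lemma bl_indep:
  assumes e: "pon_basis_Vsigma n eps \<sigma> e"
    and z: "cl_sum (\<lambda>I. cl_scale (c I) (blade_of n eps e I)) (Pow {..<n}) = cl_zero"
  shows "\<forall>I\<in>Pow {..<n}. c I = 0"
proof
  fix J assume J: "J \<in> Pow {..<n}"
  have "0 = h (blade_of n eps e J) (cl_sum (\<lambda>I. cl_scale (c I) (blade_of n eps e I)) (Pow {..<n}))"
    unfolding z h_zero_right ..
  also have "\<dots> = (\<Sum>I\<in>Pow {..<n}. c I * h (blade_of n eps e J) (blade_of n eps e I))"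
    by (simp add: h_sum_right h_scale_right)
  also have "\<dots> = (\<Sum>I\<in>Pow {..<n}. if I = J then c J * h (blade_of n eps e J) (blade_of n eps e J) else 0)"
  proof (rule sum.cong[OF refl])
    fix I assume I: "I \<in> Pow {..<n}"
    show "c I * h (blade_of n eps e J) (blade_of n eps e I) = (if I = J then c J * h (blade_of n eps e J) (blade_of n eps e J) else 0)"
    proof (cases "I = J")
      case False
      then have "J \<noteq> I" by blast
      have "h (blade_of n eps e J) (blade_of n eps e I) = 0"
        using J I \<open>J \<noteq> I\<close> by (intro bl_orth[OF e]) auto
      then show ?thesis using False by simp
    qed simp
  qed
  also have "\<dots> = c J * h (blade_of n eps e J) (blade_of n eps e J)" using J by simp
  finally have "c J * h (blade_of n eps e J) (blade_of n eps e J) = 0" by simp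
  moreover have "h (blade_of n eps e J) (blade_of n eps e J) \<noteq> 0"
  proof -
    have "J \<subseteq> {..<n}" using J by simp
    from bl_norm[OF e this] show ?thesis by auto
  qed
  ultimately show "c J = 0" by simp
qed

lemma bl_inj:
  assumes e: "pon_basis_Vsigma n eps \<sigma> e"
  shows "inj_on (blade_of n eps e) (Pow {..<n})"
proof (rule inj_onI, rule ccontr)
  fix I J assume I: "I \<in> Pow {..<n}" and J: "J \<in> Pow {..<n}" and eq: "blade_of n eps e I = blade_of n eps e J" and ne: "I \<noteq> J"
  have "h (blade_of n eps e I) (blade_of n eps e J) = 0"
    using I J ne by (intro bl_orth[OF e]) auto
  then have "h (blade_of n eps e I) (blade_of n eps e I) = 0" using eq by simp
  moreover have "I \<subseteq> {..<n}" using I by simp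
  ultimately show False using bl_norm[OF e, of I] by auto
qed

lemma bl_span:
  assumes e: "pon_basis_Vsigma n eps \<sigma> e" and a: "a \<in> CL n"
  shows "\<exists>c. a = cl_sum (\<lambda>I. cl_scale (c I) (blade_of n eps e I)) (Pow {..<n})"
proof -
  let ?b = "blade_of n eps e"
  let ?B = "?b ` Pow {..<n}"
  have inj: "inj_on ?b (Pow {..<n})" by (rule bl_inj[OF e])
  have fB: "finite ?B" by simp
  have cB: "card ?B = 2 ^ n" using card_image[OF inj] by (simp add: card_Pow)
  have reidx: "(\<Sum>v\<in>?B. cl_scale (u v) v) = (\<Sum>I\<in>Pow {..<n}. cl_scale (u (?b I)) (?b I))" for u
    using sum.reindex[OF inj, of "\<lambda>v. cl_scale (u v) v"] by (simp add: comp_def)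
  have indep: "cls.independent ?B"
  proof
    assume dep: "cls.dependent ?B"
    have "\<exists>u. (\<exists>v\<in>?B. u v \<noteq> 0) \<and> (\<Sum>v\<in>?B. cl_scale (u v) v) = 0"
      using dep unfolding cls.dependent_finite[OF fB] .
    then obtain u where u1: "\<exists>v\<in>?B. u v \<noteq> 0" and u2: "(\<Sum>v\<in>?B. cl_scale (u v) v) = 0"
      by blast
    have "cl_sum (\<lambda>I. cl_scale (u (?b I)) (?b I)) (Pow {..<n}) = cl_zero"
      unfolding cl_sum_eq cl_zero_eq reidx[symmetric] by (rule u2)
    from bl_indep[OF e this] have z: "\<forall>I\<in>Pow {..<n}. u (?b I) = 0" .
    from u1 obtain v where "v \<in> ?B" "u v \<noteq> 0" by blast
    then obtain I where "I \<in> Pow {..<n}" "v = ?b I" by blast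
    then show False using z \<open>u v \<noteq> 0\<close> by simp
  qed
  show ?thesis
  proof (cases "a \<in> cls.span ?B")
    case True
    then have "a \<in> range (\<lambda>u. \<Sum>v\<in>?B. cl_scale (u v) v)" unfolding cls.span_finite[OF fB] .
    then obtain u where "a = (\<Sum>v\<in>?B. cl_scale (u v) v)" by blast
    then have "a = cl_sum (\<lambda>I. cl_scale (u (?b I)) (?b I)) (Pow {..<n})"
      unfolding cl_sum_eq reidx .
    then show ?thesis by (intro exI[where x="\<lambda>I. u (?b I)"])
  next
    case False
    then have ind2: "cls.independent (insert a ?B)" by (rule cls.independent_insertI[OF _ indep])
    have "?B \<subseteq> cls.span ?B" by (rule cls.span_superset)
    then have "a \<notin> ?B" using False by blast
    then have c1: "card (insert a ?B) = 2 ^ n + 1" using cB fB by simp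
    have sub: "insert a ?B \<subseteq> cls.span (dl ` Pow {..<n})"
    proof
      fix x assume "x \<in> insert a ?B"
      then have "x = a \<or> x \<in> ?B" by blast
      moreover have "x \<in> ?B \<Longrightarrow> x \<in> CL n" unfolding blade_of_def using cl_prod_CL by blast
      ultimately have "x \<in> CL n" using a by blast
      then show "x \<in> cls.span (dl ` Pow {..<n})" by (rule CL_span)
    qed
    have "card (insert a ?B) \<le> card (dl ` Pow {..<n})"
      using cls.independent_span_bound[OF _ ind2 sub] by simp
    also have "\<dots> \<le> card (Pow {..<n::nat})" by (rule card_image_le) simp
    also have "\<dots> = 2 ^ n" by (simp add: card_Pow)
    finally show ?thesis using c1 by simp
  qed
qed

lemma blades: "pon_basis_Vsigma n eps \<sigma> e \<Longrightarrow> pon_basis_CL n h (blade_of n eps e)"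
  unfolding pon_basis_CL_def
proof (intro conjI ballI allI impI)
  assume e: "pon_basis_Vsigma n eps \<sigma> e"
  fix I assume "I \<in> Pow {..<n}"
  show "blade_of n eps e I \<in> CL n" unfolding blade_of_def by (rule cl_prod_CL)
next
  assume e: "pon_basis_Vsigma n eps \<sigma> e"
  fix c assume "cl_sum (\<lambda>I. cl_scale (c I) (blade_of n eps e I)) (Pow {..<n}) = cl_zero"
  from bl_indep[OF e this] show "\<And>I. I \<in> Pow {..<n} \<Longrightarrow> c I = 0" by blast
next
  assume e: "pon_basis_Vsigma n eps \<sigma> e"
  fix a assume "a \<in> CL n"
  from bl_span[OF e this] show "\<exists>c. a = cl_sum (\<lambda>I. cl_scale (c I) (blade_of n eps e I)) (Pow {..<n})" .
next
  assume e: "pon_basis_Vsigma n eps \<sigma> e"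
  fix I J assume "I \<in> Pow {..<n}" "J \<in> Pow {..<n}" "I \<noteq> J"
  then show "h (blade_of n eps e I) (blade_of n eps e J) = 0" by (intro bl_orth[OF e]) auto
next
  assume e: "pon_basis_Vsigma n eps \<sigma> e"
  fix I assume "I \<in> Pow {..<n}"
  then show "h (blade_of n eps e I) (blade_of n eps e I) = 1 \<or> h (blade_of n eps e I) (blade_of n eps e I) = -1"
    using bl_norm[OF e] by simp
qed

end

theorem proposition3:
  fixes n :: nat and eps :: "nat \<Rightarrow> real" and \<sigma> :: "cl \<Rightarrow> cl"
  assumes "even n"
    and "\<forall>i<n. eps i = 1 \<or> eps i = -1"
    and "real_structure n eps \<sigma>"
  shows "hermitian_form n (sprod n eps \<sigma>) \<and>
         nondegenerate_form n (sprod n eps \<sigma>) \<and>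
         (\<forall>v\<in>VR n. sprod n eps \<sigma> v v = Q_sigma n eps \<sigma> v) \<and>
         (\<forall>v\<in>V_sigma n \<sigma>. sprod n eps \<sigma> v v = clQ n eps v) \<and>
         (\<forall>ws. set ws \<subseteq> V_sigma n \<sigma> \<longrightarrow>
           sprod n eps \<sigma> (cl_prod n eps ws) (cl_prod n eps ws) = (\<Prod>w\<leftarrow>ws. clQ n eps w)) \<and>
         (\<forall>e. pon_basis_Vsigma n eps \<sigma> e \<longrightarrow> pon_basis_CL n (sprod n eps \<sigma>) (blade_of n eps e))"
proof -
  interpret RS n eps \<sigma> using assms by unfold_locales
  show ?thesis using herm nondeg VR_part Vs_part ws_part blades by blast
qed


end
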